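(* Let $(M,\widetilde B)$ be a root of unity quantum seed and $\mathrm{inv}\subseteq[1,N]\setminus\mathrm{ex}$. Then the root of unity quantum cluster algebra $\mathcal A_\varepsilon(M,\widetilde B,\mathrm{inv})$ and the root of unity upper quantum cluster algebra $\mathcal U_\varepsilon(M,\widetilde B,\mathrm{inv})$ are both polynomial identity (PI) domains.
   Context: Let $\ell$ be a positive integer, $\mathbb Z_\ell=\mathbb Z/\ell\mathbb Z$, $\varepsilon^{1/2}\in\mathbb C$ a primitive $\ell$-th root of unity, $\varepsilon=(\varepsilon^{1/2})^2$, and $\mathcal A^{1/2}_\varepsilon=\mathbb Z[\varepsilon^{1/2}]$. For $a\in\mathbb Z_\ell$ put $\varepsilon^{a/2}=(\varepsilon^{1/2})^a$. For an integer matrix $C$, $\overline C$ denotes its reduction mod $\ell$; $e_1,\dots,e_N$ is the standard basis of $\mathbb Z^N$. For a skew-symmetric bilinear form $\Lambda:\mathbb Z^N\times\mathbb Z^N\to\mathbb Z_\ell$ (identified with its matrix $(\lambda_{ij})=(\Lambda(e_i,e_j))$), $\mathcal T_\varepsilon(\Lambda)$ is the $\mathcal A^{1/2}_\varepsilon$-algebra with basis $\{X^f\}_{f\in\mathbb Z^N}$ and product $X^fX^g=\varepsilon^{\Lambda(f,g)/2}X^{f+g}$. A root of unity toric frame of a division algebra $\mathcal F$ over $\mathbb Q(\varepsilon^{1/2})$ is a map $M:\mathbb Z^N\to\mathcal F$ for which there are a skew-symmetric $\Lambda$ (necessarily unique; denoted $\Lambda_M$) and an injective $\mathcal A^{1/2}_\varepsilon$-algebra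 homomorphism $\phi:\mathcal T_\varepsilon(\Lambda)\to\mathcal F$ with $\phi(X^f)=M(f)$ for all $f$ and with $\mathcal F$ the skew field of fractions of $\phi(\mathcal T_\varepsilon(\Lambda))$. Fix $\mathrm{ex}\subseteq[1,N]$. An exchange matrix $\widetilde B=(b_{ij})$ is an integer matrix with rows indexed by $[1,N]$ and columns by $\mathrm{ex}$; its principal part $B$ is the $\mathrm{ex}\times\mathrm{ex}$ submatrix, and $b^k\in\mathbb Z^N$ is its $k$-th column. $(\Lambda,\widetilde B)$ is $\ell$-compatible if there is $D=\mathrm{diag}(d_j)_{j\in\mathrm{ex}}$ with positive integer entries such that $DB$ is skew-symmetric and $\sum_{k=1}^N\overline b_{kj}\lambda_{ki}=\delta_{ij}\overline d_j$ in $\mathbb Z_\ell$ for all $i\in[1,N]$, $j\in\mathrm{ex}$. A root of unity quantum seed is a pair $(M,\widetilde B)$ with $M$ a root of unity toric frame and $(\Lambda_M,\widetilde B)$ $\ell$-compatible. For $b\in\mathbb Z^N$, $[b]_+$ (resp. $[b]_-$) is obtained from $b$ by replacing its negative (resp. positive) entries by $0$. Mutation in direction $k\in\mathrm{ex}$: $\mu_k(\widetilde B)=(b'_{ij})$ with $b'_{ij}=-b_{ij}$ if $i=k$ or $j=k$, and $b'_{ij}=b_{ij}+(|b_{ik}|b_{kj}+b_{ik}|b_{kj}|)/2$ otherwise; $\mu_k(M)$ is the root of unity toric frame with matrix $\overline E^\top\Lambda_M\overline E$ (where $E\in M_N(\mathbb Z)$ has $e_{ij}=\delta_{ij}$ for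 $j\ne k$, $e_{kk}=-1$, $e_{ik}=\max(0,-b_{ik})$ for $i\neq k$) and $\mu_k(M)(e_j)=M(e_j)$ for $j\neq k$, $\mu_k(M)(e_k)=M(-e_k+[b^k]_+)+M(-e_k-[b^k]_-)$; $\mu_k(M,\widetilde B)=(\mu_k(M),\mu_k(\widetilde B))$ is again a root of unity quantum seed. Seeds related by finite sequences of mutations are mutation-equivalent. The cluster variables of a seed $(M',\widetilde B')$ are $M'(e_i)$, $i\in[1,N]$; those with $i\notin\mathrm{ex}$ (frozen) are common to all mutation-equivalent seeds. For $\mathrm{inv}\subseteq[1,N]\setminus\mathrm{ex}$, $\mathcal A_\varepsilon(M,\widetilde B,\mathrm{inv})$ is the $\mathcal A^{1/2}_\varepsilon$-subalgebra of $\mathcal F$ generated by all cluster variables of all seeds mutation-equivalent to $(M,\widetilde B)$ and by $M(e_j)^{-1}$, $j\in\mathrm{inv}$; $\mathcal U_\varepsilon(M,\widetilde B,\mathrm{inv})$ is the intersection over all seeds $(M',\widetilde B')$ mutation-equivalent to $(M,\widetilde B)$ of the subalgebras $\mathcal A^{1/2}_\varepsilon\langle M'(e_i),M'(e_j)^{-1}: i\in[1,N],\ j\in\mathrm{ex}\sqcup\mathrm{inv}\rangle$ of $\mathcal F$. *)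

theory Defs
  imports Complex_Main "HOL-Computational_Algebra.Polynomial"
begin

definition primitive_root :: "nat \<Rightarrow> complex \<Rightarrow> bool" where
  "primitive_root l z \<longleftrightarrow> 0 < l \<and> z ^ l = 1 \<and> (\<forall>k. 0 < k \<and> k < l \<longrightarrow> z ^ k \<noteq> 1)"

definition Kfield :: "complex \<Rightarrow> complex set" where
  "Kfield z = \<Inter>{S. z \<in> S \<and> 0 \<in> S \<and> 1 \<in> S \<and>
      (\<forall>a\<in>S. \<forall>b\<in>S. a + b \<in> S \<and> a - b \<in> S \<and> a * b \<in> S) \<and>
      (\<forall>a\<in>S. inverse a \<in> S)}"

definition Aring :: "complex \<Rightarrow> complex set" where
  "Aring z = {poly (map_poly of_int p) z | p :: int poly. True}"

definition division_algebra_over :: "complex \<Rightarrow> (complex \<Rightarrow> 'f::division_ring) \<Rightarrow> bool" where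
  "division_algebra_over z emb \<longleftrightarrow> emb 1 = 1 \<and>
     (\<forall>a\<in>Kfield z. \<forall>b\<in>Kfield z. emb (a + b) = emb a + emb b \<and> emb (a * b) = emb a * emb b) \<and>
     (\<forall>a\<in>Kfield z. \<forall>x. emb a * x = x * emb a)"

definition ZN :: "nat \<Rightarrow> (nat \<Rightarrow> int) set" where
  "ZN N = {f. \<forall>i. f i \<noteq> 0 \<longrightarrow> i \<in> {1..N}}"

definition ev :: "nat \<Rightarrow> nat \<Rightarrow> int" where
  "ev i = (\<lambda>j. if j = i then 1 else 0)"

definition bil :: "nat \<Rightarrow> (nat \<Rightarrow> nat \<Rightarrow> int) \<Rightarrow> (nat \<Rightarrow> int) \<Rightarrow> (nat \<Rightarrow> int) \<Rightarrow> int" where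
  "bil N lam f g = (\<Sum>i\<in>{1..N}. \<Sum>j\<in>{1..N}. f i * lam i j * g j)"

text \<open>epsh l z a = (z)^(a mod l), i.e. eps^(a/2) for a in Z_l.\<close>
definition epsh :: "nat \<Rightarrow> complex \<Rightarrow> int \<Rightarrow> complex" where
  "epsh l z a = z ^ nat (a mod int l)"

text \<open>Skew-symmetric matrix over Z_l (entries represented by integers).\<close>
definition skew_mod :: "nat \<Rightarrow> nat \<Rightarrow> (nat \<Rightarrow> nat \<Rightarrow> int) \<Rightarrow> bool" where
  "skew_mod l N lam \<longleftrightarrow> (\<forall>i\<in>{1..N}. \<forall>j\<in>{1..N}. (lam i j + lam j i) mod int l = 0)"

text \<open>Elements: finitely supported A-valued coefficient functions on Z^N.\<close>
definition Tset :: "complex \<Rightarrow> nat \<Rightarrow> ((nat \<Rightarrow> int) \<Rightarrow> complex) set" where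
  "Tset z N = {c. finite {f. c f \<noteq> 0} \<and> (\<forall>f. c f \<noteq> 0 \<longrightarrow> f \<in> ZN N) \<and> (\<forall>f. c f \<in> Aring z)}"

definition Xb :: "(nat \<Rightarrow> int) \<Rightarrow> (nat \<Rightarrow> int) \<Rightarrow> complex" where
  "Xb f = (\<lambda>g. if g = f then 1 else 0)"

definition tadd :: "((nat \<Rightarrow> int) \<Rightarrow> complex) \<Rightarrow> ((nat \<Rightarrow> int) \<Rightarrow> complex) \<Rightarrow> (nat \<Rightarrow> int) \<Rightarrow> complex" where
  "tadd c d = (\<lambda>f. c f + d f)"

definition tscal :: "complex \<Rightarrow> ((nat \<Rightarrow> int) \<Rightarrow> complex) \<Rightarrow> (nat \<Rightarrow> int) \<Rightarrow> complex" where
  "tscal a c = (\<lambda>f. a * c f)"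

text \<open>Twisted product: X^f X^g = eps^(Lambda(f,g)/2) X^(f+g), extended bilinearly.\<close>
definition tmul :: "nat \<Rightarrow> complex \<Rightarrow> nat \<Rightarrow> (nat \<Rightarrow> nat \<Rightarrow> int) \<Rightarrow>
    ((nat \<Rightarrow> int) \<Rightarrow> complex) \<Rightarrow> ((nat \<Rightarrow> int) \<Rightarrow> complex) \<Rightarrow> (nat \<Rightarrow> int) \<Rightarrow> complex" where
  "tmul l z N lam c d = (\<lambda>h. \<Sum>f\<in>{f. c f \<noteq> 0}.
      c f * d (\<lambda>i. h i - f i) * epsh l z (bil N lam f (\<lambda>i. h i - f i)))"

definition divsub :: "'f::division_ring set \<Rightarrow> 'f set" where
  "divsub S = \<Inter>{D. S \<subseteq> D \<and> 0 \<in> D \<and> 1 \<in> D \<and>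
      (\<forall>a\<in>D. \<forall>b\<in>D. a + b \<in> D \<and> a - b \<in> D \<and> a * b \<in> D) \<and> (\<forall>a\<in>D. inverse a \<in> D)}"

definition toric_frame_with :: "nat \<Rightarrow> complex \<Rightarrow> (complex \<Rightarrow> 'f::division_ring) \<Rightarrow> nat \<Rightarrow>
    (nat \<Rightarrow> nat \<Rightarrow> int) \<Rightarrow> ((nat \<Rightarrow> int) \<Rightarrow> 'f) \<Rightarrow> bool" where
  "toric_frame_with l z emb N lam M \<longleftrightarrow> skew_mod l N lam \<and>
     (\<exists>\<phi>. (\<forall>c\<in>Tset z N. \<forall>d\<in>Tset z N. \<phi> (tadd c d) = \<phi> c + \<phi> d) \<and>
          (\<forall>c\<in>Tset z N. \<forall>d\<in>Tset z N. \<phi> (tmul l z N lam c d) = \<phi> c * \<phi> d) \<and>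
          (\<forall>a\<in>Aring z. \<forall>c\<in>Tset z N. \<phi> (tscal a c) = emb a * \<phi> c) \<and>
          \<phi> (Xb (\<lambda>_. 0)) = 1 \<and>
          inj_on \<phi> (Tset z N) \<and>
          (\<forall>f\<in>ZN N. \<phi> (Xb f) = M f) \<and>
          divsub (\<phi> ` Tset z N) = UNIV)"

definition toric_frame :: "nat \<Rightarrow> complex \<Rightarrow> (complex \<Rightarrow> 'f::division_ring) \<Rightarrow> nat \<Rightarrow>
    ((nat \<Rightarrow> int) \<Rightarrow> 'f) \<Rightarrow> bool" where
  "toric_frame l z emb N M \<longleftrightarrow> (\<exists>lam. toric_frame_with l z emb N lam M)"

definition compatible :: "nat \<Rightarrow> nat \<Rightarrow> nat set \<Rightarrow> (nat \<Rightarrow> nat \<Rightarrow> int) \<Rightarrow> (nat \<Rightarrow> nat \<Rightarrow> int) \<Rightarrow> bool" where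
  "compatible l N ex lam B \<longleftrightarrow> (\<exists>d :: nat \<Rightarrow> int.
      (\<forall>j\<in>ex. 0 < d j) \<and>
      (\<forall>i\<in>ex. \<forall>j\<in>ex. d i * B i j = - (d j * B j i)) \<and>
      (\<forall>i\<in>{1..N}. \<forall>j\<in>ex. (\<Sum>k\<in>{1..N}. B k j * lam k i) mod int l
                             = (if i = j then d j mod int l else 0)))"

definition quantum_seed :: "nat \<Rightarrow> complex \<Rightarrow> (complex \<Rightarrow> 'f::division_ring) \<Rightarrow> nat \<Rightarrow> nat set \<Rightarrow>
    ((nat \<Rightarrow> int) \<Rightarrow> 'f) \<Rightarrow> (nat \<Rightarrow> nat \<Rightarrow> int) \<Rightarrow> bool" where
  "quantum_seed l z emb N ex M B \<longleftrightarrow>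
     (\<exists>lam. toric_frame_with l z emb N lam M \<and> compatible l N ex lam B)"

definition mutB :: "nat \<Rightarrow> (nat \<Rightarrow> nat \<Rightarrow> int) \<Rightarrow> nat \<Rightarrow> nat \<Rightarrow> int" where
  "mutB k B = (\<lambda>i j. if i = k \<or> j = k then - B i j
                     else B i j + (\<bar>B i k\<bar> * B k j + B i k * \<bar>B k j\<bar>) div 2)"

definition Emat :: "(nat \<Rightarrow> nat \<Rightarrow> int) \<Rightarrow> nat \<Rightarrow> nat \<Rightarrow> nat \<Rightarrow> int" where
  "Emat B k = (\<lambda>p q. if q \<noteq> k then (if p = q then 1 else 0)
                     else if p = k then -1 else max 0 (- B p k))"

definition mutLam :: "nat \<Rightarrow> (nat \<Rightarrow> nat \<Rightarrow> int) \<Rightarrow> nat \<Rightarrow> (nat \<Rightarrow> nat \<Rightarrow> int) \<Rightarrow> nat \<Rightarrow> nat \<Rightarrow> int" where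
  "mutLam N B k lam = (\<lambda>i j. \<Sum>p\<in>{1..N}. \<Sum>q\<in>{1..N}. Emat B k p i * lam p q * Emat B k q j)"

definition bcol :: "nat \<Rightarrow> (nat \<Rightarrow> nat \<Rightarrow> int) \<Rightarrow> nat \<Rightarrow> nat \<Rightarrow> int" where
  "bcol N B k = (\<lambda>i. if i \<in> {1..N} then B i k else 0)"

definition vpos :: "(nat \<Rightarrow> int) \<Rightarrow> nat \<Rightarrow> int" where
  "vpos v = (\<lambda>i. max 0 (v i))"

definition vneg :: "(nat \<Rightarrow> int) \<Rightarrow> nat \<Rightarrow> int" where
  "vneg v = (\<lambda>i. min 0 (v i))"

text \<open>Mutation of a seed in direction k (relational: mu_k(M) is the toric frame with
  matrix E^T Lambda_M E and the prescribed values on the basis vectors).\<close>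
definition mut_rel :: "nat \<Rightarrow> complex \<Rightarrow> (complex \<Rightarrow> 'f::division_ring) \<Rightarrow> nat \<Rightarrow> nat set \<Rightarrow> nat \<Rightarrow>
    ((nat \<Rightarrow> int) \<Rightarrow> 'f) \<times> (nat \<Rightarrow> nat \<Rightarrow> int) \<Rightarrow>
    ((nat \<Rightarrow> int) \<Rightarrow> 'f) \<times> (nat \<Rightarrow> nat \<Rightarrow> int) \<Rightarrow> bool" where
  "mut_rel l z emb N ex k s s' \<longleftrightarrow> (case s of (M, B) \<Rightarrow> case s' of (M', B') \<Rightarrow>
     k \<in> ex \<and> B' = mutB k B \<and>
     (\<exists>lam. toric_frame_with l z emb N lam M \<and> toric_frame_with l z emb N (mutLam N B k lam) M') \<and>
     (\<forall>j\<in>{1..N}. j \<noteq> k \<longrightarrow> M' (ev j) = M (ev j)) \<and>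
     M' (ev k) = M (\<lambda>i. - ev k i + vpos (bcol N B k) i) + M (\<lambda>i. - ev k i - vneg (bcol N B k) i))"

definition mut_equiv :: "nat \<Rightarrow> complex \<Rightarrow> (complex \<Rightarrow> 'f::division_ring) \<Rightarrow> nat \<Rightarrow> nat set \<Rightarrow>
    ((nat \<Rightarrow> int) \<Rightarrow> 'f) \<times> (nat \<Rightarrow> nat \<Rightarrow> int) \<Rightarrow>
    ((nat \<Rightarrow> int) \<Rightarrow> 'f) \<times> (nat \<Rightarrow> nat \<Rightarrow> int) \<Rightarrow> bool" where
  "mut_equiv l z emb N ex = (\<lambda>s s'. \<exists>k. mut_rel l z emb N ex k s s')\<^sup>*\<^sup>*"

definition gen_alg :: "complex \<Rightarrow> (complex \<Rightarrow> 'f::division_ring) \<Rightarrow> 'f set \<Rightarrow> 'f set" where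
  "gen_alg z emb S = \<Inter>{R. (\<forall>a\<in>Aring z. emb a \<in> R) \<and> S \<subseteq> R \<and>
      (\<forall>a\<in>R. \<forall>b\<in>R. a + b \<in> R \<and> a * b \<in> R \<and> - a \<in> R)}"

definition cluster_alg :: "nat \<Rightarrow> complex \<Rightarrow> (complex \<Rightarrow> 'f::division_ring) \<Rightarrow> nat \<Rightarrow> nat set \<Rightarrow>
    ((nat \<Rightarrow> int) \<Rightarrow> 'f) \<Rightarrow> (nat \<Rightarrow> nat \<Rightarrow> int) \<Rightarrow> nat set \<Rightarrow> 'f set" where
  "cluster_alg l z emb N ex M B invs = gen_alg z emb
     ({M' (ev i) | M' B' i. mut_equiv l z emb N ex (M, B) (M', B') \<and> i \<in> {1..N}}
      \<union> {inverse (M (ev j)) | j. j \<in> invs})"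

definition upper_cluster_alg :: "nat \<Rightarrow> complex \<Rightarrow> (complex \<Rightarrow> 'f::division_ring) \<Rightarrow> nat \<Rightarrow> nat set \<Rightarrow>
    ((nat \<Rightarrow> int) \<Rightarrow> 'f) \<Rightarrow> (nat \<Rightarrow> nat \<Rightarrow> int) \<Rightarrow> nat set \<Rightarrow> 'f set" where
  "upper_cluster_alg l z emb N ex M B invs =
     \<Inter>{gen_alg z emb ({M' (ev i) | i. i \<in> {1..N}} \<union> {inverse (M' (ev j)) | j. j \<in> ex \<union> invs})
        | M' B'. mut_equiv l z emb N ex (M, B) (M', B')}"

text \<open>Noncommutative polynomials with integer coefficients: finitely supported maps from
  words (lists of variable indices) to integers; evaluation at r.\<close>
definition nc_eval :: "(nat list \<Rightarrow> int) \<Rightarrow> (nat \<Rightarrow> 'f::ring_1) \<Rightarrow> 'f" where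
  "nc_eval p r = (\<Sum>w\<in>{w. p w \<noteq> 0}. of_int (p w) * prod_list (map r w))"

text \<open>PI ring: satisfies a monic polynomial identity (some monomial has coefficient 1).\<close>
definition PI_ring :: "'f::ring_1 set \<Rightarrow> bool" where
  "PI_ring R \<longleftrightarrow> (\<exists>p :: nat list \<Rightarrow> int. finite {w. p w \<noteq> 0} \<and> (\<exists>w. p w = 1) \<and>
      (\<forall>r. (\<forall>i. r i \<in> R) \<longrightarrow> nc_eval p r = 0))"

definition domain_set :: "'f::ring_1 set \<Rightarrow> bool" where
  "domain_set R \<longleftrightarrow> 0 \<in> R \<and> 1 \<in> R \<and> (0::'f) \<noteq> 1 \<and>
     (\<forall>a\<in>R. \<forall>b\<in>R. a + b \<in> R \<and> - a \<in> R \<and> a * b \<in> R) \<and>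
     (\<forall>a\<in>R. \<forall>b\<in>R. a * b = 0 \<longrightarrow> a = 0 \<or> b = 0)"

definition PI_domain :: "'f::ring_1 set \<Rightarrow> bool" where
  "PI_domain R \<longleftrightarrow> PI_ring R \<and> domain_set R"

end

theory Submission
  imports Defs "HOL-Combinatorics.Permutations" "HOL-Library.FuncSet"
begin


definition cen :: "'f::division_ring set" where "cen = {x. \<forall>y. x*y = y*x}"

lemma cenD: "x \<in> cen \<Longrightarrow> x * y = y * x" by (simp add: cen_def)
lemma cen_0[simp]: "0 \<in> cen" by (simp add: cen_def)
lemma cen_1[simp]: "1 \<in> cen" by (simp add: cen_def)
lemma cenI: "(\<And>y. x * y = y * x) \<Longrightarrow> x \<in> cen" by (simp add: cen_def)
lemma cen_add: "x \<in> cen \<Longrightarrow> y \<in> cen \<Longrightarrow> x + y \<in> cen"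
  by (rule cenI) (simp add: distrib_left distrib_right cenD)
lemma cen_mult: assumes "x \<in> cen" "y \<in> cen" shows "x * y \<in> cen"
proof (rule cenI)
  fix w
  have "x * y * w = x * (w * y)" using cenD[OF assms(2)] by (simp add: mult.assoc)
  also have "\<dots> = (x * w) * y" by (simp add: mult.assoc)
  also have "\<dots> = w * (x * y)" using cenD[OF assms(1), of w] by (simp add: mult.assoc)
  finally show "x * y * w = w * (x * y)" .
qed
lemma cen_uminus: "x \<in> cen \<Longrightarrow> - x \<in> cen"
  by (rule cenI) (simp add: cenD)
lemma cen_diff: "x \<in> cen \<Longrightarrow> y \<in> cen \<Longrightarrow> x - y \<in> cen"
  by (rule cenI) (simp add: left_diff_distrib right_diff_distrib cenD)
lemma cen_inverse: assumes "x \<in> cen" shows "inverse x \<in> cen"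
proof (cases "x = 0")
  case True then show ?thesis by simp
next
  case False
  show ?thesis unfolding cen_def
  proof
    show "\<forall>y. inverse x * y = y * inverse x"
    proof
      fix y
      have "inverse x * y = inverse x * (y * x) * inverse x" using False
        by (simp add: mult.assoc)
      also have "\<dots> = inverse x * (x * y) * inverse x" using cenD[OF assms] by simp
      also have "\<dots> = y * inverse x" using False by (simp add: mult.assoc[symmetric])
      finally show "inverse x * y = y * inverse x" .
    qed
  qed
qed
lemma cen_sum: "(\<And>i. i \<in> I \<Longrightarrow> f i \<in> cen) \<Longrightarrow> sum f I \<in> cen"
  by (induction I rule: infinite_finite_induct) (auto intro: cen_add)
lemma cen_of_int[simp]: "of_int k \<in> cen"
  by (simp add: cen_def mult_of_int_commute)

definition spanK :: "'f::division_ring set \<Rightarrow> 'f set" where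
  "spanK B = {v. \<exists>c. (\<forall>b\<in>B. c b \<in> cen) \<and> v = (\<Sum>b\<in>B. c b * b)}"

lemma span_0: "0 \<in> spanK B"
  unfolding spanK_def by (rule CollectI, rule exI[of _ "\<lambda>_. 0"]) simp

lemma span_add: assumes "x \<in> spanK B" "y \<in> spanK B" shows "x + y \<in> spanK B"
proof -
  obtain c d where c: "\<forall>b\<in>B. c b \<in> cen" "x = (\<Sum>b\<in>B. c b * b)"
    and d: "\<forall>b\<in>B. d b \<in> cen" "y = (\<Sum>b\<in>B. d b * b)" using assms unfolding spanK_def by blast
  show ?thesis unfolding spanK_def
    by (rule CollectI, rule exI[of _ "\<lambda>b. c b + d b"])
       (simp add: c d cen_add distrib_right sum.distrib)
qed

lemma span_scal: assumes "k \<in> cen" "x \<in> spanK B" shows "k * x \<in> spanK B"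
proof -
  obtain c where c: "\<forall>b\<in>B. c b \<in> cen" "x = (\<Sum>b\<in>B. c b * b)"
    using assms unfolding spanK_def by blast
  show ?thesis unfolding spanK_def
    by (rule CollectI, rule exI[of _ "\<lambda>b. k * c b"])
       (simp add: c assms cen_mult sum_distrib_left mult.assoc)
qed

lemma span_uminus: "x \<in> spanK B \<Longrightarrow> - x \<in> spanK B"
  using span_scal[of "-1" x B] cen_uminus[OF cen_1] by simp

lemma span_diff: "x \<in> spanK B \<Longrightarrow> y \<in> spanK B \<Longrightarrow> x - y \<in> spanK B"
  using span_add[of x B "-y"] span_uminus[of y B] by simp

lemma span_sum: "(\<And>i. i \<in> I \<Longrightarrow> f i \<in> spanK B) \<Longrightarrow> sum f I \<in> spanK B"
  by (induction I rule: infinite_finite_induct) (auto intro: span_add span_0)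

lemma span_base: assumes "finite B" "b \<in> B" shows "b \<in> spanK B"
  unfolding spanK_def
proof (rule CollectI, rule exI[of _ "\<lambda>x. if x = b then 1 else 0"], intro conjI)
  have "(\<Sum>x\<in>B. (if x = b then 1 else 0) * x) = (\<Sum>x\<in>B. if x = b then b else 0)"
    by (rule sum.cong) auto
  then show "b = (\<Sum>x\<in>B. (if x = b then 1 else 0) * x)"
    using assms by simp
qed simp

lemma span_empty: "spanK {} = {0}"
  unfolding spanK_def by auto

lemma span_insert:
  assumes "finite B" "b \<notin> B" "v \<in> spanK (insert b B)"
  shows "\<exists>k w. k \<in> cen \<and> w \<in> spanK B \<and> v = k * b + w"
proof -
  obtain c where c: "\<forall>x\<in>insert b B. c x \<in> cen" "v = (\<Sum>x\<in>insert b B. c x * x)"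
    using assms unfolding spanK_def by blast
  have "v = c b * b + (\<Sum>x\<in>B. c x * x)" using c assms by simp
  moreover have "(\<Sum>x\<in>B. c x * x) \<in> spanK B" unfolding spanK_def using c by auto
  ultimately show ?thesis using c by blast
qed

lemma span_mono: assumes "A \<subseteq> B" "finite B" shows "spanK A \<subseteq> spanK B"
proof
  fix v assume "v \<in> spanK A"
  then obtain c where c: "\<forall>b\<in>A. c b \<in> cen" "v = (\<Sum>b\<in>A. c b * b)" unfolding spanK_def by blast
  show "v \<in> spanK B" unfolding c(2)
    by (rule span_sum, rule span_scal) (use c assms in \<open>auto intro: span_base\<close>)
qed

lemma dependent:
  assumes "finite B"
  shows "finite I \<Longrightarrow> card B < card I \<Longrightarrow> (\<forall>i\<in>I. a i \<in> spanK B) \<Longrightarrow>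
     \<exists>k. (\<forall>i\<in>I. k i \<in> cen) \<and> (\<exists>i\<in>I. k i \<noteq> 0) \<and> (\<Sum>i\<in>I. k i * a i) = 0"
using assms proof (induction B arbitrary: I a rule: finite_induct)
  case empty
  then have "I \<noteq> {}" by auto
  moreover have "\<forall>i\<in>I. a i = 0" using empty span_empty by auto
  ultimately show ?case by (intro exI[of _ "\<lambda>_. 1"]) auto
next
  case (insert b B)
  have "\<forall>i\<in>I. \<exists>p. fst p \<in> cen \<and> snd p \<in> spanK B \<and> a i = fst p * b + snd p"
  proof
    fix i assume "i \<in> I"
    then obtain k w where "k \<in> cen \<and> w \<in> spanK B \<and> a i = k * b + w"
      using span_insert[OF insert(1,2)] insert.prems(3) by blast
    then show "\<exists>p. fst p \<in> cen \<and> snd p \<in> spanK B \<and> a i = fst p * b + snd p"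
      by (intro exI[of _ "(k, w)"]) simp
  qed
  then obtain f where f: "\<forall>i\<in>I. fst (f i) \<in> cen \<and> snd (f i) \<in> spanK B \<and> a i = fst (f i) * b + snd (f i)"
    by (metis bchoice)
  define C where "C i = fst (f i)" for i
  define W where "W i = snd (f i)" for i
  have CW: "C i \<in> cen" "W i \<in> spanK B" "a i = C i * b + W i" if "i \<in> I" for i
    using f that unfolding C_def W_def by auto
  have cardB: "card (insert b B) = Suc (card B)" using insert by simp
  show ?case
  proof (cases "\<forall>i\<in>I. C i = 0")
    case True
    then have "\<forall>i\<in>I. a i \<in> spanK B" using CW by simp
    then show ?thesis using insert.IH[of I a] insert.prems cardB by simp
  next
    case False
    then obtain j where j: "j \<in> I" "C j \<noteq> 0" by blast
    define t where "t i = C i * inverse (C j)" for i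
    define I' where "I' = I - {j}"
    define a' where "a' i = a i - t i * a j" for i
    have tcen: "t i \<in> cen" if "i \<in> I" for i
      unfolding t_def using CW that j by (simp add: cen_mult cen_inverse)
    have a'span: "\<forall>i\<in>I'. a' i \<in> spanK B"
    proof
      fix i assume i: "i \<in> I'"
      then have iI: "i \<in> I" unfolding I'_def by auto
      have "t i * (C j * b) = C i * b"
        using j unfolding t_def by (simp add: mult.assoc[symmetric]) (simp add: mult.assoc)
      then have "a' i = W i - t i * W j"
        unfolding a'_def using CW[OF iI] CW[OF j(1)] by (simp add: distrib_left)
      then show "a' i \<in> spanK B"
        using CW[OF iI] CW[OF j(1)] tcen[OF iI] by (simp add: span_diff span_scal)
    qed
    have fI': "finite I'" using insert.prems unfolding I'_def by simp
    have cI': "card B < card I'" using insert.prems j cardB unfolding I'_def by simp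
    obtain k' where k': "\<forall>i\<in>I'. k' i \<in> cen" "\<exists>i\<in>I'. k' i \<noteq> 0" "(\<Sum>i\<in>I'. k' i * a' i) = 0"
      using insert.IH[OF fI' cI' a'span] by blast
    define s where "s = (\<Sum>i\<in>I'. k' i * t i)"
    define k where "k = k'(j := - s)"
    have jI': "j \<notin> I'" unfolding I'_def by simp
    have "(\<Sum>i\<in>I'. k' i * a' i) = (\<Sum>i\<in>I'. k' i * a i) - s * a j"
      unfolding a'_def s_def by (simp add: right_diff_distrib sum_subtractf sum_distrib_right mult.assoc)
    then have e1: "(\<Sum>i\<in>I'. k' i * a i) = s * a j" using k'(3) by simp
    have "(\<Sum>i\<in>I. k i * a i) = k j * a j + (\<Sum>i\<in>I'. k i * a i)"
      using insert.prems(1) j(1) unfolding I'_def by (simp add: sum.remove)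
    also have "(\<Sum>i\<in>I'. k i * a i) = (\<Sum>i\<in>I'. k' i * a i)"
      using jI' unfolding k_def by (intro sum.cong) auto
    finally have "(\<Sum>i\<in>I. k i * a i) = 0" using e1 unfolding k_def by simp
    moreover have "\<forall>i\<in>I. k i \<in> cen"
    proof
      fix i assume "i \<in> I"
      show "k i \<in> cen"
      proof (cases "i = j")
        case True
        have "s \<in> cen" unfolding s_def
          by (rule cen_sum) (use k'(1) tcen I'_def in \<open>auto intro: cen_mult\<close>)
        then show ?thesis using True unfolding k_def by (simp add: cen_uminus)
      next
        case False
        then show ?thesis using k'(1) \<open>i \<in> I\<close> unfolding k_def I'_def by auto
      qed
    qed
    moreover have "\<exists>i\<in>I. k i \<noteq> 0" using k'(2) jI' unfolding k_def I'_def by auto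
    ultimately show ?thesis by blast
  qed
qed

lemma span_mult:
  assumes B: "finite B" and cl: "\<forall>b1\<in>B. \<forall>b2\<in>B. b1 * b2 \<in> spanK B"
    and x: "x \<in> spanK B" and y: "y \<in> spanK B"
  shows "x * y \<in> spanK B"
proof -
  obtain c where c: "\<forall>b\<in>B. c b \<in> cen" "x = (\<Sum>b\<in>B. c b * b)"
    using x unfolding spanK_def by blast
  obtain d where d: "\<forall>b\<in>B. d b \<in> cen" "y = (\<Sum>b\<in>B. d b * b)"
    using y unfolding spanK_def by blast
  have "x * y = (\<Sum>b\<in>B. \<Sum>b'\<in>B. (c b * b) * (d b' * b'))"
    unfolding c(2) d(2) by (simp add: sum_distrib_left sum_distrib_right) (rule sum.swap)
  also have "\<dots> \<in> spanK B"
  proof (intro span_sum)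
    fix b b' assume bb: "b \<in> B" "b' \<in> B"
    have "(c b * b) * (d b' * b') = (c b * d b') * (b * b')"
    proof -
      have "b * (d b' * b') = d b' * (b * b')"
        using cenD[of "d b'" b] d(1) bb by (simp add: mult.assoc[symmetric])
      then show ?thesis by (simp add: mult.assoc)
    qed
    then show "(c b * b) * (d b' * b') \<in> spanK B"
      using bb c(1) d(1) cl by (simp add: span_scal cen_mult)
  qed
  finally show ?thesis .
qed

lemma span_power:
  assumes B: "finite B" and cl: "\<forall>b1\<in>B. \<forall>b2\<in>B. b1 * b2 \<in> spanK B"
    and one: "1 \<in> spanK B" and x: "x \<in> spanK B"
  shows "x ^ n \<in> spanK B"
  by (induction n) (auto intro: span_mult[OF B cl] x one)

lemma span_inverse:
  assumes B: "finite B" and cl: "\<forall>b1\<in>B. \<forall>b2\<in>B. b1 * b2 \<in> spanK B"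
    and one: "1 \<in> spanK B" and x: "x \<in> spanK B"
  shows "inverse x \<in> spanK B"
proof (cases "x = 0")
  case True then show ?thesis using span_0 by simp
next
  case False
  define d where "d = card B"
  define I where "I = {0..d}"
  have pw: "\<forall>i\<in>I. x ^ i \<in> spanK B" using span_power[OF B cl one x] by blast
  obtain k where k: "\<forall>i\<in>I. k i \<in> cen" "\<exists>i\<in>I. k i \<noteq> 0" "(\<Sum>i\<in>I. k i * x ^ i) = 0"
    using dependent[OF B, of I "\<lambda>i. x ^ i"] pw unfolding I_def d_def by auto
  define m where "m = Min {i\<in>I. k i \<noteq> 0}"
  have fin: "finite {i\<in>I. k i \<noteq> 0}" unfolding I_def by simp
  have mI: "m \<in> {i\<in>I. k i \<noteq> 0}" unfolding m_def using fin k(2) by (intro Min_in) auto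
  have below: "k i = 0" if "i < m" for i
  proof (rule ccontr)
    assume "k i \<noteq> 0"
    moreover have "i \<in> I" using that mI unfolding I_def by auto
    ultimately have "m \<le> i" unfolding m_def using fin by (intro Min_le) auto
    then show False using that by simp
  qed
  have md: "m \<le> d" using mI unfolding I_def by auto
  define y where "y = (\<Sum>i\<in>{Suc m..d}. k i * x ^ (i - Suc m))"
  have yspan: "y \<in> spanK B" unfolding y_def
    using k(1) span_power[OF B cl one x] unfolding I_def by (intro span_sum span_scal) auto
  have "(\<Sum>i\<in>I. k i * x ^ i) = (\<Sum>i\<in>{m..d}. k i * x ^ i)"
    unfolding I_def by (rule sum.mono_neutral_right) (auto simp: below)
  also have "\<dots> = k m * x ^ m + (\<Sum>i\<in>{Suc m..d}. k i * x ^ i)"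
    using md by (simp add: sum.atLeast_Suc_atMost)
  also have "(\<Sum>i\<in>{Suc m..d}. k i * x ^ i) = x ^ m * x * y"
    unfolding y_def sum_distrib_left
  proof (rule sum.cong)
    fix i assume "i \<in> {Suc m..d}"
    then have "x ^ i = x ^ m * x * x ^ (i - Suc m)"
      by (metis (no_types, lifting) Suc_le_eq atLeastAtMost_iff le_add_diff_inverse power_Suc2 power_add less_eq_Suc_le)
    moreover have "k i \<in> cen" using k(1) \<open>i \<in> {Suc m..d}\<close> unfolding I_def by auto
    ultimately show "k i * x ^ i = x ^ m * x * (k i * x ^ (i - Suc m))"
      using cenD[of "k i" "x ^ m * x"] by (simp add: mult.assoc[symmetric])
  qed simp
  finally have "k m * x ^ m + x ^ m * x * y = 0" using k(3) by simp
  moreover have "k m * x ^ m = x ^ m * k m" using cenD[of "k m"] k(1) mI by auto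
  ultimately have "x ^ m * (k m + x * y) = 0" by (simp add: distrib_left mult.assoc)
  then have e: "x * y = - k m" using False by (simp add: eq_neg_iff_add_eq_0 add.commute)
  have km: "k m \<noteq> 0" "k m \<in> cen" using mI k(1) by auto
  have "x * (- inverse (k m) * y) = - inverse (k m) * (x * y)"
    using cenD[of "- inverse (k m)" x] km by (simp add: cen_uminus cen_inverse mult.assoc[symmetric])
  also have "\<dots> = 1" using e km by simp
  finally have "inverse x = - inverse (k m) * y" by (rule inverse_unique)
  then show ?thesis using yspan km by (simp add: span_scal span_uminus cen_inverse)
qed

lemma cen_prod_list: "(\<forall>x\<in>set xs. c x \<in> cen) \<Longrightarrow> prod_list (map c xs) \<in> cen"
  by (induction xs) (auto intro: cen_mult)

lemma prod_list_cen_split: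
  "(\<forall>x\<in>set xs. c x \<in> cen) \<Longrightarrow>
   prod_list (map (\<lambda>x. c x * w x) xs) = prod_list (map c xs) * prod_list (map w xs)"
proof (induction xs)
  case Nil then show ?case by simp
next
  case (Cons x xs)
  have C: "prod_list (map c xs) \<in> cen" using Cons.prems by (intro cen_prod_list) auto
  have "prod_list (map (\<lambda>x. c x * w x) (x # xs)) = c x * w x * (prod_list (map c xs) * prod_list (map w xs))"
    using Cons by simp
  also have "\<dots> = c x * (w x * prod_list (map c xs)) * prod_list (map w xs)" by (simp add: mult.assoc)
  also have "\<dots> = c x * (prod_list (map c xs) * w x) * prod_list (map w xs)" using cenD[OF C] by simp
  finally show ?case by (simp add: mult.assoc)
qed

lemma prod_list_cen_perm:
  "mset xs = mset ys \<Longrightarrow> (\<forall>x\<in>set xs. c x \<in> cen) \<Longrightarrow>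
   prod_list (map c xs) = prod_list (map c ys)"
proof (induction xs arbitrary: ys)
  case Nil then show ?case by simp
next
  case (Cons x xs)
  have "x \<in> set ys" using Cons.prems(1) by (metis list.set_intros(1) set_mset_mset)
  then obtain ys1 ys2 where ys: "ys = ys1 @ x # ys2" by (meson split_list)
  have m: "mset xs = mset (ys1 @ ys2)" using Cons.prems(1) ys by simp
  have cx: "c x \<in> cen" using Cons.prems(2) by simp
  have "prod_list (map c ys) = prod_list (map c ys1) * c x * prod_list (map c ys2)"
    using ys by (simp add: mult.assoc)
  also have "\<dots> = c x * prod_list (map c ys1) * prod_list (map c ys2)" using cenD[OF cx] by simp
  also have "\<dots> = c x * prod_list (map c (ys1 @ ys2))" by (simp add: mult.assoc)
  also have "\<dots> = c x * prod_list (map c xs)" using Cons.IH[OF m] Cons.prems(2) by simp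
  finally show ?case by simp
qed

lemma prod_list_sum_expand:
  fixes F :: "'a \<Rightarrow> 'b \<Rightarrow> 'f::ring_1"
  shows "distinct xs \<Longrightarrow> prod_list (map (\<lambda>x. \<Sum>b\<in>B. F x b) xs) =
     (\<Sum>g\<in>PiE (set xs) (\<lambda>_. B). prod_list (map (\<lambda>x. F x (g x)) xs))"
proof (induction xs)
  case Nil then show ?case by simp
next
  case (Cons x xs)
  have nx: "x \<notin> set xs" using Cons.prems by simp
  have "prod_list (map (\<lambda>x. \<Sum>b\<in>B. F x b) (x # xs)) =
        (\<Sum>b\<in>B. F x b) * (\<Sum>g\<in>PiE (set xs) (\<lambda>_. B). prod_list (map (\<lambda>x. F x (g x)) xs))"
    using Cons by simp
  also have "\<dots> = (\<Sum>(b, g)\<in>B \<times> PiE (set xs) (\<lambda>_. B). F x b * prod_list (map (\<lambda>x. F x (g x)) xs))"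
    by (subst sum_distrib_right, subst sum_distrib_left, simp add: sum.cartesian_product)
  also have "\<dots> = (\<Sum>(b, g)\<in>B \<times> PiE (set xs) (\<lambda>_. B). prod_list (map (\<lambda>y. F y ((g(x := b)) y)) (x # xs)))"
  proof (rule sum.cong, simp, clarify)
    fix b g
    have m: "map (\<lambda>y. F y ((g(x := b)) y)) xs = map (\<lambda>y. F y (g y)) xs"
      using nx by (intro map_cong) auto
    show "F x b * prod_list (map (\<lambda>x. F x (g x)) xs) = prod_list (map (\<lambda>y. F y ((g(x := b)) y)) (x # xs))"
      unfolding list.map prod_list.Cons fun_upd_same m ..
  qed
  also have "\<dots> = (\<Sum>g\<in>(\<lambda>(y, g). g(x := y)) ` (B \<times> PiE (set xs) (\<lambda>_. B)). prod_list (map (\<lambda>y. F y (g y)) (x # xs)))"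
    by (subst sum.reindex[OF inj_combinator[OF nx]]) (simp add: case_prod_unfold)
  also have "\<dots> = (\<Sum>g\<in>PiE (set (x # xs)) (\<lambda>_. B). prod_list (map (\<lambda>y. F y (g y)) (x # xs)))"
    by (simp add: PiE_insert_eq)
  finally show ?case .
qed

definition altsum :: "nat \<Rightarrow> (nat \<Rightarrow> 'f::division_ring) \<Rightarrow> 'f" where
  "altsum n r = (\<Sum>\<sigma>\<in>{p. p permutes {0..<n}}. of_int (sign \<sigma>) * prod_list (map (\<lambda>j. r (\<sigma> j)) [0..<n]))"

lemma altsum_eq:
  assumes two: "(2::'f::division_ring) \<noteq> 0" and ab: "a < n" "b < n" "a \<noteq> b" and r: "r a = r b"
  shows "altsum n (r :: nat \<Rightarrow> 'f) = 0"
proof -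
  define \<tau> where "\<tau> = transpose a b"
  have tp: "\<tau> permutes {0..<n}" unfolding \<tau>_def using ab by (intro permutes_swap_id) auto
  have rt: "r (\<tau> x) = r x" for x unfolding \<tau>_def using r by (simp add: transpose_def)
  have "altsum n r = (\<Sum>\<sigma>\<in>{p. p permutes {0..<n}}. of_int (sign (\<tau> \<circ> \<sigma>)) * prod_list (map (\<lambda>j. r ((\<tau> \<circ> \<sigma>) j)) [0..<n]))"
    unfolding altsum_def by (rule setum_permutations_compose_left[OF tp])
  also have "\<dots> = (\<Sum>\<sigma>\<in>{p. p permutes {0..<n}}. - (of_int (sign \<sigma>) * prod_list (map (\<lambda>j. r (\<sigma> j)) [0..<n])))"
  proof (rule sum.cong, simp)
    fix \<sigma> assume "\<sigma> \<in> {p. p permutes {0..<n}}"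
    then have sp: "permutation \<sigma>" using permutation_permutes by blast
    have tpp: "permutation \<tau>" using tp permutation_permutes by blast
    have "sign (\<tau> \<circ> \<sigma>) = - sign \<sigma>" using sign_compose[OF tpp sp] ab unfolding \<tau>_def by (simp add: sign_swap_id)
    then show "of_int (sign (\<tau> \<circ> \<sigma>)) * prod_list (map (\<lambda>j. r ((\<tau> \<circ> \<sigma>) j)) [0..<n]) =
          - (of_int (sign \<sigma>) * prod_list (map (\<lambda>j. r (\<sigma> j)) [0..<n]))"
      by (simp add: rt)
  qed
  also have "\<dots> = - altsum n r" unfolding altsum_def by (simp add: sum_negf)
  finally have h: "altsum n r = - altsum n r" .
  have "altsum n r + altsum n r = 0" by (metis h add.right_inverse)
  then have "2 * altsum n r = 0" by (simp add: mult_2)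
  then show ?thesis using two by simp
qed

lemma altsum_noninj:
  assumes "(2::'f::division_ring) \<noteq> 0" "\<not> inj_on r {0..<n}"
  shows "altsum n (r :: nat \<Rightarrow> 'f) = 0"
proof -
  obtain a b where "a \<in> {0..<n}" "b \<in> {0..<n}" "a \<noteq> b" "r a = r b" using assms(2) unfolding inj_on_def by blast
  then show ?thesis using altsum_eq[OF assms(1)] by auto
qed

lemma altsum_expand:
  fixes r :: "nat \<Rightarrow> 'f::division_ring"
  assumes c: "\<forall>i b. c i b \<in> cen" and r: "\<forall>i. r i = (\<Sum>b\<in>B. c i b * b)"
  shows "altsum n r = (\<Sum>g\<in>PiE {0..<n} (\<lambda>_. B). prod_list (map (\<lambda>i. c i (g i)) [0..<n]) * altsum n g)"
proof -
  have key: "prod_list (map (\<lambda>j. r (\<sigma> j)) [0..<n]) =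
     (\<Sum>g\<in>PiE {0..<n} (\<lambda>_. B). prod_list (map (\<lambda>i. c i (g i)) [0..<n]) * prod_list (map (\<lambda>j. g (\<sigma> j)) [0..<n]))"
    if sp: "\<sigma> permutes {0..<n}" for \<sigma>
  proof -
    have d: "distinct (map \<sigma> [0..<n])" using permutes_inj_on[OF sp] by (simp add: distinct_map)
    have st: "set (map \<sigma> [0..<n]) = {0..<n}" using permutes_image[OF sp] by simp
    have ms: "mset (map \<sigma> [0..<n]) = mset [0..<n]"
      by (metis d st distinct_upt set_upt set_eq_iff_mset_eq_distinct)
    have "prod_list (map (\<lambda>j. r (\<sigma> j)) [0..<n]) = prod_list (map (\<lambda>x. \<Sum>b\<in>B. c x b * b) (map \<sigma> [0..<n]))"
      using r by (simp add: o_def)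
    also have "\<dots> = (\<Sum>g\<in>PiE {0..<n} (\<lambda>_. B). prod_list (map (\<lambda>x. c x (g x) * g x) (map \<sigma> [0..<n])))"
      using prod_list_sum_expand[OF d, of "\<lambda>x b. c x b * b" B] st by simp
    also have "\<dots> = (\<Sum>g\<in>PiE {0..<n} (\<lambda>_. B). prod_list (map (\<lambda>i. c i (g i)) [0..<n]) * prod_list (map (\<lambda>j. g (\<sigma> j)) [0..<n]))"
    proof (rule sum.cong, simp)
      fix g
      have "prod_list (map (\<lambda>x. c x (g x) * g x) (map \<sigma> [0..<n])) =
            prod_list (map (\<lambda>x. c x (g x)) (map \<sigma> [0..<n])) * prod_list (map g (map \<sigma> [0..<n]))"
        using c by (intro prod_list_cen_split) auto
      also have "prod_list (map (\<lambda>x. c x (g x)) (map \<sigma> [0..<n])) = prod_list (map (\<lambda>x. c x (g x)) [0..<n])"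
        using c ms by (intro prod_list_cen_perm) auto
      finally show "prod_list (map (\<lambda>x. c x (g x) * g x) (map \<sigma> [0..<n])) =
            prod_list (map (\<lambda>i. c i (g i)) [0..<n]) * prod_list (map (\<lambda>j. g (\<sigma> j)) [0..<n])"
        by (simp add: o_def)
    qed
    finally show ?thesis .
  qed
  have "altsum n r = (\<Sum>\<sigma>\<in>{p. p permutes {0..<n}}. \<Sum>g\<in>PiE {0..<n} (\<lambda>_. B).
      prod_list (map (\<lambda>i. c i (g i)) [0..<n]) * (of_int (sign \<sigma>) * prod_list (map (\<lambda>j. g (\<sigma> j)) [0..<n])))"
    unfolding altsum_def
  proof (rule sum.cong, simp)
    fix \<sigma> assume "\<sigma> \<in> {p. p permutes {0..<n}}"
    show "of_int (sign \<sigma>) * prod_list (map (\<lambda>j. r (\<sigma> j)) [0..<n]) = (\<Sum>g\<in>PiE {0..<n} (\<lambda>_. B).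
      prod_list (map (\<lambda>i. c i (g i)) [0..<n]) * (of_int (sign \<sigma>) * prod_list (map (\<lambda>j. g (\<sigma> j)) [0..<n])))"
      unfolding key[OF \<open>\<sigma> \<in> {p. p permutes {0..<n}}\<close>[simplified]] sum_distrib_left
    proof (rule sum.cong, simp)
      fix g
      show "of_int (sign \<sigma>) * (prod_list (map (\<lambda>i. c i (g i)) [0..<n]) * prod_list (map (\<lambda>j. g (\<sigma> j)) [0..<n])) =
          prod_list (map (\<lambda>i. c i (g i)) [0..<n]) * (of_int (sign \<sigma>) * prod_list (map (\<lambda>j. g (\<sigma> j)) [0..<n]))"
        by (metis mult.assoc mult_of_int_commute)
    qed
  qed
  also have "\<dots> = (\<Sum>g\<in>PiE {0..<n} (\<lambda>_. B). \<Sum>\<sigma>\<in>{p. p permutes {0..<n}}.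
      prod_list (map (\<lambda>i. c i (g i)) [0..<n]) * (of_int (sign \<sigma>) * prod_list (map (\<lambda>j. g (\<sigma> j)) [0..<n])))"
    by (rule sum.swap)
  also have "\<dots> = (\<Sum>g\<in>PiE {0..<n} (\<lambda>_. B). prod_list (map (\<lambda>i. c i (g i)) [0..<n]) * altsum n g)"
    unfolding altsum_def by (simp add: sum_distrib_left)
  finally show ?thesis .
qed

definition sp :: "nat \<Rightarrow> nat list \<Rightarrow> int" where
  "sp n w = (if \<exists>\<sigma>. \<sigma> permutes {0..<n} \<and> w = map \<sigma> [0..<n]
     then sign (THE \<sigma>. \<sigma> permutes {0..<n} \<and> w = map \<sigma> [0..<n]) else 0)"

lemma perm_word_inj: "inj_on (\<lambda>\<sigma>. map \<sigma> [0..<n]) {p. p permutes {0..<n}}"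
proof (rule inj_onI)
  fix \<sigma> \<tau> assume s: "\<sigma> \<in> {p. p permutes {0..<n}}" and t: "\<tau> \<in> {p. p permutes {0..<n}}"
    and e: "map \<sigma> [0..<n] = map \<tau> [0..<n]"
  show "\<sigma> = \<tau>"
  proof
    fix x show "\<sigma> x = \<tau> x"
    proof (cases "x < n")
      case True then show ?thesis using e by (metis map_eq_conv atLeastLessThan_iff set_upt zero_le)
    next
      case False then show ?thesis using s t by (simp add: permutes_not_in)
    qed
  qed
qed

lemma sp_perm: "\<sigma> permutes {0..<n} \<Longrightarrow> sp n (map \<sigma> [0..<n]) = sign \<sigma>"
proof -
  assume s: "\<sigma> permutes {0..<n}"
  have "(THE \<tau>. \<tau> permutes {0..<n} \<and> map \<sigma> [0..<n] = map \<tau> [0..<n]) = \<sigma>"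
    using s perm_word_inj[of n] unfolding inj_on_def by (intro the_equality) auto
  then show ?thesis using s unfolding sp_def by auto
qed

lemma sp_support: "{w. sp n w \<noteq> 0} = (\<lambda>\<sigma>. map \<sigma> [0..<n]) ` {p. p permutes {0..<n}}"
proof
  show "{w. sp n w \<noteq> 0} \<subseteq> (\<lambda>\<sigma>. map \<sigma> [0..<n]) ` {p. p permutes {0..<n}}"
    unfolding sp_def by (auto split: if_splits)
  show "(\<lambda>\<sigma>. map \<sigma> [0..<n]) ` {p. p permutes {0..<n}} \<subseteq> {w. sp n w \<noteq> 0}"
    using sp_perm by auto
qed

lemma nc_eval_sp: "nc_eval (sp n) (r :: nat \<Rightarrow> 'f::division_ring) = altsum n r"
proof -
  have "nc_eval (sp n) r = (\<Sum>w\<in>(\<lambda>\<sigma>. map \<sigma> [0..<n]) ` {p. p permutes {0..<n}}. of_int (sp n w) * prod_list (map r w))"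
    unfolding nc_eval_def sp_support ..
  also have "\<dots> = (\<Sum>\<sigma>\<in>{p. p permutes {0..<n}}. of_int (sp n (map \<sigma> [0..<n])) * prod_list (map r (map \<sigma> [0..<n])))"
    by (subst sum.reindex[OF perm_word_inj]) simp
  also have "\<dots> = altsum n r" unfolding altsum_def
    by (rule sum.cong) (auto simp: sp_perm o_def)
  finally show ?thesis .
qed

lemma PI_UNIV:
  fixes B :: "'f::division_ring set"
  assumes B: "finite B" and sp: "spanK B = UNIV" and two: "(2::'f) \<noteq> 0"
  shows "PI_ring (UNIV :: 'f set)"
proof -
  define n where "n = Suc (card B)"
  show ?thesis unfolding PI_ring_def
proof (intro exI[of _ "sp n"] conjI allI impI)
  show "finite {w. sp n w \<noteq> 0}" unfolding sp_support by (simp add: finite_permutations)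
  show "\<exists>w. sp n w = 1" using sp_perm[of id n] by (intro exI[of _ "map id [0..<n]"]) simp
  fix r :: "nat \<Rightarrow> 'f"
  have "\<forall>i. \<exists>c. (\<forall>b\<in>B. c b \<in> cen) \<and> r i = (\<Sum>b\<in>B. c b * b)"
    using sp unfolding spanK_def by blast
  then obtain c0 where c0: "\<forall>i. (\<forall>b\<in>B. c0 i b \<in> cen) \<and> r i = (\<Sum>b\<in>B. c0 i b * b)" by metis
  define c where "c i b = (if b \<in> B then c0 i b else 0)" for i b
  have c: "\<forall>i b. c i b \<in> cen" using c0 unfolding c_def by auto
  have r: "\<forall>i. r i = (\<Sum>b\<in>B. c i b * b)" using c0 unfolding c_def by auto
  have "altsum n r = 0"
    unfolding altsum_expand[OF c r]
  proof (rule sum.neutral, rule ballI)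
    fix g assume g: "g \<in> PiE {0..<n} (\<lambda>_. B)"
    have "\<not> inj_on g {0..<n}"
    proof
      assume "inj_on g {0..<n}"
      moreover have "g ` {0..<n} \<subseteq> B" using g by auto
      ultimately have "card {0..<n} \<le> card B" using B by (intro card_inj_on_le) auto
      then show False unfolding n_def by simp
    qed
    then show "prod_list (map (\<lambda>i. c i (g i)) [0..<n]) * altsum n g = 0"
      using altsum_noninj[OF two] by simp
  qed
  then show "nc_eval (sp n) r = 0" by (simp add: nc_eval_sp)
qed
qed



definition KP :: "complex \<Rightarrow> complex set \<Rightarrow> bool" where
  "KP z S \<longleftrightarrow> z \<in> S \<and> 0 \<in> S \<and> 1 \<in> S \<and>
      (\<forall>a\<in>S. \<forall>b\<in>S. a + b \<in> S \<and> a - b \<in> S \<and> a * b \<in> S) \<and> (\<forall>a\<in>S. inverse a \<in> S)"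
lemma Kfield_iff: "x \<in> Kfield z \<longleftrightarrow> (\<forall>S. KP z S \<longrightarrow> x \<in> S)"
  unfolding Kfield_def KP_def by blast
lemma Kfield_z: "z \<in> Kfield z" and Kfield_0: "0 \<in> Kfield z" and Kfield_1: "1 \<in> Kfield z"
  unfolding Kfield_iff KP_def by simp_all
lemma Kfield_add: "a \<in> Kfield z \<Longrightarrow> b \<in> Kfield z \<Longrightarrow> a + b \<in> Kfield z"
  and Kfield_diff: "a \<in> Kfield z \<Longrightarrow> b \<in> Kfield z \<Longrightarrow> a - b \<in> Kfield z"
  and Kfield_mult: "a \<in> Kfield z \<Longrightarrow> b \<in> Kfield z \<Longrightarrow> a * b \<in> Kfield z"
  and Kfield_inv: "a \<in> Kfield z \<Longrightarrow> inverse a \<in> Kfield z"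
  unfolding Kfield_iff KP_def by simp_all
lemma Kfield_uminus: "a \<in> Kfield z \<Longrightarrow> - a \<in> Kfield z"
  using Kfield_diff[OF Kfield_0, of a z] by simp
lemma Kfield_pow: "a \<in> Kfield z \<Longrightarrow> a ^ n \<in> Kfield z"
  by (induction n) (auto intro: Kfield_mult Kfield_1)
lemma Kfield_of_nat: "of_nat n \<in> Kfield z"
  by (induction n) (auto intro: Kfield_add Kfield_1 Kfield_0)
lemma Kfield_of_int: "of_int k \<in> Kfield z"
proof (cases k rule: int_cases)
  case (nonneg n) then show ?thesis using Kfield_of_nat[of n z] by simp
next
  case (neg n) then show ?thesis using Kfield_uminus[OF Kfield_of_nat[of "Suc n" z]] by simp
qed

lemma Aring_Kfield: "x \<in> Aring z \<Longrightarrow> x \<in> Kfield z"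
proof -
  assume "x \<in> Aring z"
  then obtain p :: "int poly" where x: "x = poly (map_poly of_int p) z" unfolding Aring_def by blast
  have "poly (map_poly (of_int :: int \<Rightarrow> complex) p) z \<in> Kfield z"
  proof (induction p rule: pCons_induct)
    case 0 then show ?case by (simp add: Kfield_0)
  next
    case (pCons a p)
    then show ?case
      by (auto simp: map_poly_pCons Kfield_0 intro!: Kfield_add Kfield_mult Kfield_of_int Kfield_z)
  qed
  then show ?thesis using x by simp
qed

lemma Aring_pow: "z ^ n \<in> Aring z"
proof -
  have "poly (map_poly (of_int :: int \<Rightarrow> complex) (monom 1 n)) z = z ^ n"
    by (simp add: map_poly_monom poly_monom)
  then show ?thesis unfolding Aring_def by (metis (mono_tags, lifting) mem_Collect_eq)
qed
lemma Aring_0: "0 \<in> Aring z"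
proof -
  have "poly (map_poly (of_int :: int \<Rightarrow> complex) 0) z = 0" by simp
  then show ?thesis unfolding Aring_def by (metis (mono_tags, lifting) mem_Collect_eq)
qed
lemma Aring_1: "1 \<in> Aring z" using Aring_pow[of z 0] by simp

lemma epsh_Aring: "epsh l z a \<in> Aring z" unfolding epsh_def by (rule Aring_pow)

lemma ZN_0: "(\<lambda>_. 0) \<in> ZN N" by (simp add: ZN_def)
lemma ZN_add: "f \<in> ZN N \<Longrightarrow> g \<in> ZN N \<Longrightarrow> (\<lambda>i. f i + g i) \<in> ZN N"
  by (simp add: ZN_def) (metis add.right_neutral)
lemma ZN_mod: "f \<in> ZN N \<Longrightarrow> (\<lambda>i. f i mod k) \<in> ZN N"
  by (simp add: ZN_def) (metis mod_0)
lemma ZN_div: "f \<in> ZN N \<Longrightarrow> (\<lambda>i. f i div k) \<in> ZN N"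
  by (simp add: ZN_def) (metis div_0)
lemma ZN_scale: "f \<in> ZN N \<Longrightarrow> (\<lambda>i. k * f i) \<in> ZN N"
  by (simp add: ZN_def)

lemma Xb_supp: "{g. Xb f g \<noteq> 0} = {f}" by (auto simp: Xb_def)

lemma Xb_T: "f \<in> ZN N \<Longrightarrow> Xb f \<in> Tset z N"
  unfolding Tset_def using Aring_0 Aring_1 by (auto simp: Xb_def)

lemma tscal_Xb_T: "a \<in> Aring z \<Longrightarrow> f \<in> ZN N \<Longrightarrow> tscal a (Xb f) \<in> Tset z N"
  unfolding Tset_def tscal_def using Aring_0 by (auto simp: Xb_def)

lemma restr_T: "finite S \<Longrightarrow> S \<subseteq> ZN N \<Longrightarrow> (\<forall>f. c f \<in> Aring z) \<Longrightarrow>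
   (\<lambda>h. if h \<in> S then c h else 0) \<in> Tset z N"
  unfolding Tset_def using Aring_0 by (auto elim: finite_subset[rotated])

lemma tmul_Xb: "tmul l z N lam (Xb f) (Xb g) = tscal (epsh l z (bil N lam f g)) (Xb (\<lambda>i. f i + g i))"
proof
  fix h
  have e: "((\<lambda>i. h i - f i) = g) = (h = (\<lambda>i. f i + g i))"
    by (simp add: fun_eq_iff) (metis diff_add_cancel add_diff_cancel_left' add.commute)
  show "tmul l z N lam (Xb f) (Xb g) h = tscal (epsh l z (bil N lam f g)) (Xb (\<lambda>i. f i + g i)) h"
  proof (cases "h = (\<lambda>i. f i + g i)")
    case True
    then have "(\<lambda>i. h i - f i) = g" by auto
    then show ?thesis unfolding tmul_def Xb_supp tscal_def using True by (simp add: Xb_def)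
  next
    case False
    then have "(\<lambda>i. h i - f i) \<noteq> g" using e by simp
    then show ?thesis unfolding tmul_def Xb_supp tscal_def using False by (simp add: Xb_def)
  qed
qed

lemma bil_scale_left: "bil N lam (\<lambda>i. k * q i) g = k * bil N lam q g"
  unfolding bil_def by (simp add: sum_distrib_left mult.assoc)
lemma bil_scale_right: "bil N lam g (\<lambda>i. k * q i) = k * bil N lam g q"
  unfolding bil_def by (simp add: sum_distrib_left mult.assoc mult.left_commute)
lemma epsh_mult: "epsh l z (int l * k) = 1" unfolding epsh_def by simp

lemma emb_facts:
  assumes "division_algebra_over z emb"
  shows "emb 1 = 1" "a \<in> Kfield z \<Longrightarrow> b \<in> Kfield z \<Longrightarrow> emb (a + b) = emb a + emb b"
    "a \<in> Kfield z \<Longrightarrow> b \<in> Kfield z \<Longrightarrow> emb (a * b) = emb a * emb b"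
    "a \<in> Kfield z \<Longrightarrow> emb a \<in> cen"
proof -
  show "emb 1 = 1" using assms unfolding division_algebra_over_def by blast
  show "a \<in> Kfield z \<Longrightarrow> b \<in> Kfield z \<Longrightarrow> emb (a + b) = emb a + emb b"
    using assms unfolding division_algebra_over_def by blast
  show "a \<in> Kfield z \<Longrightarrow> b \<in> Kfield z \<Longrightarrow> emb (a * b) = emb a * emb b"
    using assms unfolding division_algebra_over_def by blast
  show "a \<in> Kfield z \<Longrightarrow> emb a \<in> cen"
  proof -
    assume a: "a \<in> Kfield z"
    have "\<forall>x. emb a * x = x * emb a" using assms a unfolding division_algebra_over_def by blast
    then show "emb a \<in> cen" by (intro cenI) blast
  qed
qed

lemma emb_0: assumes "division_algebra_over z emb" shows "emb 0 = 0"
proof -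
  have "emb (0 + 0) = emb 0 + emb 0" using emb_facts(2)[OF assms Kfield_0 Kfield_0] .
  then have "emb 0 + emb 0 = emb 0 + 0" by simp
  then show ?thesis by (rule add_left_imp_eq)
qed

lemma two_ne_0: assumes "division_algebra_over z (emb :: complex \<Rightarrow> 'f::division_ring)" shows "(2::'f) \<noteq> 0"
proof
  assume h: "(2::'f) = 0"
  have K2: "(2::complex) \<in> Kfield z" using Kfield_add[OF Kfield_1 Kfield_1, of z] by simp
  have "emb (1 + 1) = emb 1 + emb 1" using emb_facts(2)[OF assms Kfield_1 Kfield_1] .
  then have "emb 2 = emb 1 + emb 1" by (simp add: one_add_one)
  then have e2: "emb 2 = 0" using h emb_facts(1)[OF assms] by (simp add: one_add_one)
  have "emb (inverse 2 * 2) = emb (inverse 2) * emb 2"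
    using emb_facts(3)[OF assms Kfield_inv[OF K2] K2] .
  then have "emb 1 = 0" using e2 by simp
  then show False using emb_facts(1)[OF assms] by simp
qed



definition UU :: "nat \<Rightarrow> nat \<Rightarrow> (nat \<Rightarrow> int) set" where
  "UU l' N' = {u. u \<in> ZN N' \<and> (\<forall>i. 0 \<le> u i \<and> u i < int l')}"

lemma UU_finite: "finite (UU l' N')"
proof -
  have "UU l' N' \<subseteq> {f. \<forall>x. (x \<in> {1..N'} \<longrightarrow> f x \<in> {0..<int l'}) \<and> (x \<notin> {1..N'} \<longrightarrow> f x = 0)}"
    unfolding UU_def ZN_def by auto
  moreover have "finite {f. \<forall>x. (x \<in> {1..N'} \<longrightarrow> f x \<in> {0..<int l'}) \<and> (x \<notin> {1..N'} \<longrightarrow> f x = (0::int))}"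
    by (rule finite_set_of_finite_funs) auto
  ultimately show ?thesis by (rule finite_subset)
qed


context
  fixes l N :: nat and z :: complex and emb :: "complex \<Rightarrow> 'f::division_ring"
    and lam :: "nat \<Rightarrow> nat \<Rightarrow> int" and ph :: "((nat \<Rightarrow> int) \<Rightarrow> complex) \<Rightarrow> 'f"
    and M :: "(nat \<Rightarrow> int) \<Rightarrow> 'f"
  assumes lpos: "0 < l"
    and da: "division_algebra_over z emb"
    and hadd: "\<forall>c\<in>Tset z N. \<forall>d\<in>Tset z N. ph (tadd c d) = ph c + ph d"
    and hmul: "\<forall>c\<in>Tset z N. \<forall>d\<in>Tset z N. ph (tmul l z N lam c d) = ph c * ph d"
    and hscal: "\<forall>a\<in>Aring z. \<forall>c\<in>Tset z N. ph (tscal a c) = emb a * ph c"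
    and h1: "ph (Xb (\<lambda>_. 0)) = 1"
    and hX: "\<forall>f\<in>ZN N. ph (Xb f) = M f"
    and hdiv: "divsub (ph ` Tset z N) = UNIV"
begin

lemma M_mult: "f \<in> ZN N \<Longrightarrow> g \<in> ZN N \<Longrightarrow>
  M f * M g = emb (epsh l z (bil N lam f g)) * M (\<lambda>i. f i + g i)"
proof -
  assume f: "f \<in> ZN N" and g: "g \<in> ZN N"
  have "M f * M g = ph (Xb f) * ph (Xb g)" using hX f g by simp
  also have "\<dots> = ph (tmul l z N lam (Xb f) (Xb g))" using hmul Xb_T[OF f] Xb_T[OF g] by simp
  also have "\<dots> = ph (tscal (epsh l z (bil N lam f g)) (Xb (\<lambda>i. f i + g i)))" by (simp add: tmul_Xb)
  also have "\<dots> = emb (epsh l z (bil N lam f g)) * ph (Xb (\<lambda>i. f i + g i))"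
    using hscal epsh_Aring Xb_T[OF ZN_add[OF f g]] by simp
  also have "\<dots> = emb (epsh l z (bil N lam f g)) * M (\<lambda>i. f i + g i)" using hX ZN_add[OF f g] by simp
  finally show ?thesis .
qed

lemma M_split: "q \<in> ZN N \<Longrightarrow> g \<in> ZN N \<Longrightarrow> M (\<lambda>i. int l * q i) * M g = M (\<lambda>i. int l * q i + g i)"
  using M_mult[OF ZN_scale, of q g "int l"] by (simp add: bil_scale_left epsh_mult emb_facts(1)[OF da])

lemma M_split': "q \<in> ZN N \<Longrightarrow> g \<in> ZN N \<Longrightarrow> M g * M (\<lambda>i. int l * q i) = M (\<lambda>i. int l * q i + g i)"
  using M_mult[OF _ ZN_scale, of g q "int l"] by (simp add: bil_scale_right epsh_mult emb_facts(1)[OF da] add.commute)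

lemma ph_zero: "ph (\<lambda>_. 0) = 0"
proof -
  have T: "(\<lambda>_. 0) \<in> Tset z N" unfolding Tset_def using Aring_0 by simp
  have "tadd (\<lambda>_. 0) (\<lambda>_. 0) = (\<lambda>_. 0)" by (simp add: tadd_def)
  then have "ph (\<lambda>_. 0) = ph (\<lambda>_. 0) + ph (\<lambda>_. 0)" using hadd T by metis
  then have "ph (\<lambda>_. 0) + ph (\<lambda>_. 0) = ph (\<lambda>_. 0) + 0" by simp
  then show ?thesis by (rule add_left_imp_eq)
qed

lemma ph_restr: "finite S \<Longrightarrow> S \<subseteq> ZN N \<Longrightarrow> (\<forall>f. c f \<in> Aring z) \<Longrightarrow>
   ph (\<lambda>h. if h \<in> S then c h else 0) = (\<Sum>f\<in>S. emb (c f) * M f)"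
proof (induction S rule: finite_induct)
  case empty then show ?case using ph_zero by simp
next
  case (insert f S)
  have e: "(\<lambda>h. if h \<in> insert f S then c h else 0) = tadd (tscal (c f) (Xb f)) (\<lambda>h. if h \<in> S then c h else 0)"
    using insert(2) by (intro ext) (auto simp: tadd_def tscal_def Xb_def)
  have fZ: "f \<in> ZN N" using insert by simp
  have "ph (\<lambda>h. if h \<in> insert f S then c h else 0) = ph (tscal (c f) (Xb f)) + ph (\<lambda>h. if h \<in> S then c h else 0)"
    unfolding e using hadd tscal_Xb_T[OF _ fZ] restr_T[OF insert(1)] insert.prems by auto
  also have "ph (tscal (c f) (Xb f)) = emb (c f) * M f" using hscal Xb_T[OF fZ] hX fZ insert.prems by simp
  finally show ?case using insert by simp
qed

lemma ph_decomp: "c \<in> Tset z N \<Longrightarrow> ph c = (\<Sum>f\<in>{f. c f \<noteq> 0}. emb (c f) * M f)"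
proof -
  assume c: "c \<in> Tset z N"
  have "c = (\<lambda>h. if h \<in> {f. c f \<noteq> 0} then c h else 0)" by auto
  then have "ph c = ph (\<lambda>h. if h \<in> {f. c f \<noteq> 0} then c h else 0)" by simp
  also have "\<dots> = (\<Sum>f\<in>{f. c f \<noteq> 0}. emb (c f) * M f)"
    using c unfolding Tset_def by (intro ph_restr) auto
  finally show ?thesis .
qed

lemma divsub_sub:
  assumes "ph ` Tset z N \<subseteq> D" "0 \<in> D" "1 \<in> D"
    "\<forall>a\<in>D. \<forall>b\<in>D. a + b \<in> D \<and> a - b \<in> D \<and> a * b \<in> D" "\<forall>a\<in>D. inverse a \<in> D"
  shows "D = UNIV"
proof -
  have "divsub (ph ` Tset z N) \<subseteq> D" unfolding divsub_def using assms by (intro Inter_lower) simp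
  then show ?thesis using hdiv by blast
qed

lemma M_central: assumes q: "q \<in> ZN N" shows "M (\<lambda>i. int l * q i) \<in> cen"
proof -
  define x where "x = M (\<lambda>i. int l * q i)"
  define D where "D = {y. x * y = y * x}"
  have xM: "x * M g = M g * x" if "g \<in> ZN N" for g
    unfolding x_def using M_split[OF q that] M_split'[OF q that] by simp
  have "ph ` Tset z N \<subseteq> D"
  proof
    fix y assume "y \<in> ph ` Tset z N"
    then obtain c where c: "c \<in> Tset z N" "y = ph c" by blast
    have y: "y = (\<Sum>f\<in>{f. c f \<noteq> 0}. emb (c f) * M f)" using ph_decomp[OF c(1)] c(2) by simp
    have "x * y = (\<Sum>f\<in>{f. c f \<noteq> 0}. x * (emb (c f) * M f))" unfolding y by (simp add: sum_distrib_left)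
    also have "\<dots> = (\<Sum>f\<in>{f. c f \<noteq> 0}. (emb (c f) * M f) * x)"
    proof (rule sum.cong, simp)
      fix f assume "f \<in> {f. c f \<noteq> 0}"
      then have fZ: "f \<in> ZN N" and cA: "c f \<in> Aring z" using c(1) unfolding Tset_def by auto
      have ce: "emb (c f) \<in> cen" using emb_facts(4)[OF da Aring_Kfield[OF cA]] .
      have "x * (emb (c f) * M f) = emb (c f) * (x * M f)"
        using cenD[OF ce, of x] by (simp add: mult.assoc[symmetric])
      also have "\<dots> = emb (c f) * M f * x" using xM[OF fZ] by (simp add: mult.assoc)
      finally show "x * (emb (c f) * M f) = emb (c f) * M f * x" .
    qed
    also have "\<dots> = y * x" unfolding y by (simp add: sum_distrib_right)
    finally show "y \<in> D" unfolding D_def by simp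
  qed
  moreover have "\<forall>a\<in>D. \<forall>b\<in>D. a + b \<in> D \<and> a - b \<in> D \<and> a * b \<in> D"
    unfolding D_def by (simp add: distrib_left distrib_right left_diff_distrib right_diff_distrib)
      (metis mult.assoc)
  moreover have "\<forall>a\<in>D. inverse a \<in> D"
  proof
    fix a assume a: "a \<in> D"
    show "inverse a \<in> D"
    proof (cases "a = 0")
      case True then show ?thesis unfolding D_def by simp
    next
      case False
      have "x * inverse a = inverse a * (a * x) * inverse a" using False by (simp add: mult.assoc[symmetric])
      also have "\<dots> = inverse a * (x * a) * inverse a" using a unfolding D_def by simp
      also have "\<dots> = inverse a * x" using False by (simp add: mult.assoc)
      finally show ?thesis unfolding D_def by simp
    qed
  qed
  ultimately have "D = UNIV" by (intro divsub_sub) (auto simp: D_def)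
  then show ?thesis unfolding D_def x_def cen_def by auto
qed


lemma M_span: assumes f: "f \<in> ZN N" shows "M f \<in> spanK (M ` UU l N)"
proof -
  define q where "q i = f i div int l" for i
  define r where "r i = f i mod int l" for i
  have qZ: "q \<in> ZN N" unfolding q_def using ZN_div[OF f] by simp
  have rZ: "r \<in> ZN N" unfolding r_def using ZN_mod[OF f] by simp
  have rU: "r \<in> UU l N" unfolding UU_def using rZ lpos by (simp add: r_def)
  have "f = (\<lambda>i. int l * q i + r i)" unfolding q_def r_def by (simp add: mult_div_mod_eq)
  then have "M f = M (\<lambda>i. int l * q i) * M r" using M_split[OF qZ rZ] by simp
  then show ?thesis using M_central[OF qZ] rU UU_finite
    by (simp add: span_scal span_base)
qed

lemma span_UNIV: "spanK (M ` UU l N) = UNIV"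
proof -
  define V where "V = spanK (M ` UU l N)"
  have fin: "finite (M ` UU l N)" using UU_finite by simp
  have cl: "\<forall>b1\<in>M ` UU l N. \<forall>b2\<in>M ` UU l N. b1 * b2 \<in> spanK (M ` UU l N)"
  proof (intro ballI)
    fix b1 b2 assume "b1 \<in> M ` UU l N" "b2 \<in> M ` UU l N"
    then obtain u v where uv: "u \<in> ZN N" "v \<in> ZN N" "b1 = M u" "b2 = M v" unfolding UU_def by auto
    have "b1 * b2 = emb (epsh l z (bil N lam u v)) * M (\<lambda>i. u i + v i)" using M_mult uv by simp
    moreover have "emb (epsh l z (bil N lam u v)) \<in> cen"
      using emb_facts(4)[OF da Aring_Kfield[OF epsh_Aring]] .
    ultimately show "b1 * b2 \<in> spanK (M ` UU l N)"
      using M_span[OF ZN_add[OF uv(1,2)]] by (simp add: span_scal)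
  qed
  have one: "1 \<in> V" unfolding V_def using M_span[OF ZN_0] hX h1 ZN_0 by metis
  have "ph ` Tset z N \<subseteq> V"
  proof
    fix y assume "y \<in> ph ` Tset z N"
    then obtain c where c: "c \<in> Tset z N" "y = ph c" by blast
    have y: "y = (\<Sum>f\<in>{f. c f \<noteq> 0}. emb (c f) * M f)" using ph_decomp[OF c(1)] c(2) by simp
    show "y \<in> V" unfolding y V_def
    proof (intro span_sum span_scal)
      fix f assume "f \<in> {f. c f \<noteq> 0}"
      then have fZ: "f \<in> ZN N" and cA: "c f \<in> Aring z" using c(1) unfolding Tset_def by auto
      show "emb (c f) \<in> cen" using emb_facts(4)[OF da Aring_Kfield[OF cA]] .
      show "M f \<in> spanK (M ` UU l N)" using M_span[OF fZ] .
    qed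
  qed
  moreover have "0 \<in> V" unfolding V_def by (rule span_0)
  moreover have "\<forall>a\<in>V. \<forall>b\<in>V. a + b \<in> V \<and> a - b \<in> V \<and> a * b \<in> V"
    unfolding V_def using span_add span_diff span_mult[OF fin cl] by blast
  moreover have "\<forall>a\<in>V. inverse a \<in> V"
    unfolding V_def using span_inverse[OF fin cl] one unfolding V_def by blast
  ultimately have "V = UNIV" using one by (intro divsub_sub) auto
  then show ?thesis unfolding V_def .
qed

end



lemma PI_mono: "PI_ring (UNIV :: 'f::ring_1 set) \<Longrightarrow> PI_ring (R :: 'f set)"
  unfolding PI_ring_def by blast

lemma domain_setI:
  fixes R :: "'f::division_ring set"
  assumes "0 \<in> R" "1 \<in> R" "\<forall>a\<in>R. \<forall>b\<in>R. a + b \<in> R \<and> - a \<in> R \<and> a * b \<in> R"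
  shows "domain_set R"
  unfolding domain_set_def using assms by simp

definition ringP :: "'f::division_ring set \<Rightarrow> bool" where
  "ringP R \<longleftrightarrow> 0 \<in> R \<and> 1 \<in> R \<and> (\<forall>a\<in>R. \<forall>b\<in>R. a + b \<in> R \<and> - a \<in> R \<and> a * b \<in> R)"

lemma ringP_domain: "ringP R \<Longrightarrow> domain_set R"
  unfolding ringP_def by (intro domain_setI) auto

lemma ringP_Inter: "(\<forall>R\<in>F. ringP R) \<Longrightarrow> ringP (\<Inter>F)"
  unfolding ringP_def by blast

lemma gen_alg_ringP:
  assumes da: "division_algebra_over z emb"
  shows "ringP (gen_alg z emb S)"
proof -
  have e0: "emb 0 = 0" using emb_0[OF da] .
  have e1: "emb 1 = 1" using emb_facts(1)[OF da] .
  show ?thesis unfolding ringP_def gen_alg_def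
  proof (intro conjI)
    show "0 \<in> \<Inter>{R. (\<forall>a\<in>Aring z. emb a \<in> R) \<and> S \<subseteq> R \<and> (\<forall>a\<in>R. \<forall>b\<in>R. a + b \<in> R \<and> a * b \<in> R \<and> - a \<in> R)}"
      using Aring_0[of z] e0 by force
    show "1 \<in> \<Inter>{R. (\<forall>a\<in>Aring z. emb a \<in> R) \<and> S \<subseteq> R \<and> (\<forall>a\<in>R. \<forall>b\<in>R. a + b \<in> R \<and> a * b \<in> R \<and> - a \<in> R)}"
      using Aring_1[of z] e1 by force
  qed blast
qed

theorem theorem3p11:
  fixes l N :: nat and z :: complex and emb :: "complex \<Rightarrow> 'f::division_ring"
    and ex invs :: "nat set"
    and M :: "(nat \<Rightarrow> int) \<Rightarrow> 'f" and B :: "nat \<Rightarrow> nat \<Rightarrow> int"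
  assumes "primitive_root l z"
    and "division_algebra_over z emb"
    and "ex \<subseteq> {1..N}"
    and "invs \<subseteq> {1..N} - ex"
    and "quantum_seed l z emb N ex M B"
  shows "PI_domain (cluster_alg l z emb N ex M B invs) \<and>
         PI_domain (upper_cluster_alg l z emb N ex M B invs)"
proof -
  have lpos: "0 < l" using assms(1) unfolding primitive_root_def by simp
  have da: "division_algebra_over z emb" by fact
  obtain lam where "toric_frame_with l z emb N lam M" using assms(5) unfolding quantum_seed_def by blast
  then obtain ph where
    hadd: "\<forall>c\<in>Tset z N. \<forall>d\<in>Tset z N. ph (tadd c d) = ph c + ph d"
    and hmul: "\<forall>c\<in>Tset z N. \<forall>d\<in>Tset z N. ph (tmul l z N lam c d) = ph c * ph d"
    and hscal: "\<forall>a\<in>Aring z. \<forall>c\<in>Tset z N. ph (tscal a c) = emb a * ph c"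
    and h1: "ph (Xb (\<lambda>_. 0)) = 1"
    and hX: "\<forall>f\<in>ZN N. ph (Xb f) = M f"
    and hdiv: "divsub (ph ` Tset z N) = UNIV"
    unfolding toric_frame_with_def by blast
  have sp: "spanK (M ` UU l N) = UNIV"
    by (rule span_UNIV[OF lpos da hadd hmul hscal h1 hX hdiv])
  have PI: "PI_ring (UNIV :: 'f set)"
    using PI_UNIV[OF _ sp two_ne_0[OF da]] UU_finite by simp
  have d1: "domain_set (cluster_alg l z emb N ex M B invs)"
    unfolding cluster_alg_def by (intro ringP_domain gen_alg_ringP[OF da])
  have d2: "domain_set (upper_cluster_alg l z emb N ex M B invs)"
    unfolding upper_cluster_alg_def
    by (intro ringP_domain ringP_Inter) (auto intro: gen_alg_ringP[OF da])
  show ?thesis unfolding PI_domain_def using PI_mono[OF PI] d1 d2 by blast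
qed


end
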